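(* Let $k\ge2$ and let $z_{ij}\in\mathbb{C}$, $1\le i<j\le k$, satisfy $|z_{ij}|\le1$; set $z_{ji}=\overline{z_{ij}}$. Then the linear map $\Phi_{2k}^{(\mathbf z)}:M_{2k}(\mathbb{C})\to M_{2k}(\mathbb{C})$ defined below is positive.
   Context: Write $X\in M_{2k}(\mathbb{C})$ as a $k\times k$ block matrix $X=(X_{ij})_{i,j=1}^k$ with $X_{ij}\in M_2(\mathbb{C})$. Let $R_2:M_2(\mathbb{C})\to M_2(\mathbb{C})$, $R_2(Y)=\mathbb{I}_2\operatorname{Tr}Y-Y$. Define $\Phi_{2k}^{(\mathbf z)}(X)$ as the $k\times k$ block matrix with diagonal blocks $\frac{1}{2(k-1)}(\operatorname{Tr}X-\operatorname{Tr}X_{ii})\mathbb{I}_2$ and, for $i\ne j$, off-diagonal blocks $-\frac{z_{ij}}{2(k-1)}\big(X_{ij}-R_2(X_{ji})\big)$. (For all $z_{ij}=1$ this is the generalized Robertson map $\Phi_{2k}$.) A linear map is positive if it sends positive semidefinite matrices to positive semidefinite matrices. *)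

theory Defs
  imports Complex_Main
begin

text \<open>Square complex matrices of size n are represented as functions
  nat \<Rightarrow> nat \<Rightarrow> complex; only entries with indices < n are relevant.
  A 2k x 2k matrix is viewed as k x k block matrix of 2x2 blocks: the row index
  a corresponds to block i = a div 2 and position r = a mod 2 inside the block
  (indices are 0-based).\<close>

type_synonym cmat = "nat \<Rightarrow> nat \<Rightarrow> complex"

definition mtrace :: "nat \<Rightarrow> cmat \<Rightarrow> complex" where
  "mtrace n X = (\<Sum>a<n. X a a)"

definition psd :: "nat \<Rightarrow> cmat \<Rightarrow> bool" where
  "psd n A \<longleftrightarrow> (\<forall>a<n. \<forall>b<n. A b a = cnj (A a b)) \<and>
     (\<forall>x :: nat \<Rightarrow> complex. 0 \<le> Re (\<Sum>a<n. \<Sum>b<n. cnj (x a) * A a b * x b))"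

definition positive_map :: "nat \<Rightarrow> (cmat \<Rightarrow> cmat) \<Rightarrow> bool" where
  "positive_map n \<Phi> \<longleftrightarrow> (\<forall>X. psd n X \<longrightarrow> psd n (\<Phi> X))"

definition blk :: "cmat \<Rightarrow> nat \<Rightarrow> nat \<Rightarrow> cmat" where
  "blk X i j = (\<lambda>r s. X (2*i + r) (2*j + s))"

definition R2 :: "cmat \<Rightarrow> cmat" where
  "R2 Y = (\<lambda>r s. (if r = s then mtrace 2 Y else 0) - Y r s)"

definition Phi_z :: "nat \<Rightarrow> (nat \<Rightarrow> nat \<Rightarrow> complex) \<Rightarrow> cmat \<Rightarrow> cmat" where
  "Phi_z k z X = (\<lambda>a b.
     let i = a div 2; r = a mod 2; j = b div 2; s = b mod 2 in
     if i = j then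
       (if r = s then (mtrace (2*k) X - mtrace 2 (blk X i i)) / (2 * (of_nat k - 1)) else 0)
     else - z i j / (2 * (of_nat k - 1)) * (blk X i j r s - R2 (blk X j i) r s))"

end

theory Submission
  imports Defs
begin


definition qf :: "nat \<Rightarrow> cmat \<Rightarrow> (nat \<Rightarrow> complex) \<Rightarrow> complex" where
  "qf n Y x = (\<Sum>a<n. \<Sum>b<n. cnj (x a) * Y a b * x b)"
definition bf :: "nat \<Rightarrow> cmat \<Rightarrow> (nat \<Rightarrow> complex) \<Rightarrow> (nat \<Rightarrow> complex) \<Rightarrow> complex" where
  "bf n Y x y = (\<Sum>a<n. \<Sum>b<n. cnj (x a) * Y a b * y b)"

lemma qf_lin: "qf n Y (\<lambda>i. a * x i + b * y i) =
   cnj a * a * qf n Y x + cnj a * b * bf n Y x y + cnj b * a * bf n Y y x + cnj b * b * qf n Y y"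
proof -
  have pt: "\<And>a' b'. cnj (a * x a' + b * y a') * Y a' b' * (a * x b' + b * y b') =
     cnj a * a * (cnj (x a') * Y a' b' * x b') + cnj a * b * (cnj (x a') * Y a' b' * y b')
     + cnj b * a * (cnj (y a') * Y a' b' * x b') + cnj b * b * (cnj (y a') * Y a' b' * y b')"
    by (simp add: algebra_simps)
  show ?thesis unfolding qf_def bf_def pt sum.distrib sum_distrib_left by simp
qed

lemma bf_herm:
  assumes "\<forall>a<n. \<forall>b<n. Y b a = cnj (Y a b)"
  shows "bf n Y y x = cnj (bf n Y x y)"
proof -
  have "cnj (bf n Y x y) = (\<Sum>a<n. \<Sum>b<n. x a * Y b a * cnj (y b))"
    unfolding bf_def cnj_sum
  proof (intro sum.cong refl)
    fix a b assume "a \<in> {..<n}" "b \<in> {..<n}"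
    then have "Y b a = cnj (Y a b)" using assms by blast
    then have "cnj (Y a b) = Y b a" by simp
    then show "cnj (cnj (x a) * Y a b * y b) = x a * Y b a * cnj (y b)" by simp
  qed
  also have "\<dots> = (\<Sum>b<n. \<Sum>a<n. x a * Y b a * cnj (y b))" by (rule sum.swap)
  also have "\<dots> = bf n Y y x" unfolding bf_def by (simp add: algebra_simps)
  finally show ?thesis by simp
qed

lemma qf_lin_re:
  assumes "\<forall>a<n. \<forall>b<n. Y b a = cnj (Y a b)"
  shows "Re (qf n Y (\<lambda>i. a * x i + b * y i)) =
    (cmod a)^2 * Re (qf n Y x) + 2 * Re (cnj a * b * bf n Y x y) + (cmod b)^2 * Re (qf n Y y)"
proof -
  have h: "bf n Y y x = cnj (bf n Y x y)" using bf_herm[OF assms] .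
  have e1: "cnj a * a = of_real ((cmod a)^2)" by (metis complex_norm_square mult.commute)
  have e2: "cnj b * b = of_real ((cmod b)^2)" by (metis complex_norm_square mult.commute)
  have "Re (cnj b * a * bf n Y y x) = Re (cnj a * b * bf n Y x y)"
  proof -
    have "cnj b * a * bf n Y y x = cnj (cnj a * b * bf n Y x y)" unfolding h by simp
    then show ?thesis by (metis cnj.sel(1))
  qed
  then show ?thesis unfolding qf_lin e1 e2 by simp
qed


definition cterm :: "cmat \<Rightarrow> (nat \<Rightarrow> complex) \<Rightarrow> (nat \<Rightarrow> complex) \<Rightarrow> complex" where
  "cterm Y u w = (\<Sum>r<2. \<Sum>s<2. cnj (u r) * (Y r (2+s) - R2 (\<lambda>r s. Y (2+r) s) r s) * w s)"


lemma qp: "qf 4 Y (\<lambda>i::nat. if i = 0 then a else if i = 1 then b else 0) = cnj a * Y 0 0 * a + cnj a * Y 0 1 * b + cnj b * Y 1 0 * a + cnj b * Y 1 1 * b"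
  by (simp add: qf_def eval_nat_numeral)
lemma qq: "qf 4 Y (\<lambda>i::nat. if i = 2 then a else if i = 3 then b else 0) = cnj a * Y 2 2 * a + cnj a * Y 2 3 * b + cnj b * Y 3 2 * a + cnj b * Y 3 3 * b"
  by (simp add: qf_def eval_nat_numeral)
lemma bpq: "bf 4 Y (\<lambda>i::nat. if i = 0 then a else if i = 1 then b else 0) (\<lambda>i::nat. if i = 2 then c else if i = 3 then d else 0) = cnj a * Y 0 2 * c + cnj a * Y 0 3 * d + cnj b * Y 1 2 * c + cnj b * Y 1 3 * d"
  by (simp add: bf_def eval_nat_numeral)
lemma bqp: "bf 4 Y (\<lambda>i::nat. if i = 2 then c else if i = 3 then d else 0) (\<lambda>i::nat. if i = 0 then a else if i = 1 then b else 0) = cnj c * Y 2 0 * a + cnj c * Y 2 1 * b + cnj d * Y 3 0 * a + cnj d * Y 3 1 * b"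
  by (simp add: bf_def eval_nat_numeral)
lemma ct: "cterm Y u w = cnj (u 0) * (Y 0 2 - (Y 2 0 + Y 3 1 - Y 2 0)) * w 0 + cnj (u 0) * (Y 0 3 + Y 2 1) * w 1
   + cnj (u 1) * (Y 1 2 + Y 3 0) * w 0 + cnj (u 1) * (Y 1 3 - (Y 2 0 + Y 3 1 - Y 3 1)) * w 1"
  by (simp add: cterm_def R2_def mtrace_def eval_nat_numeral)

lemma Re_ofr: "Re (complex_of_real r * w) = r * Re w" by simp

lemma key4:
  assumes psd: "psd 4 Y" and hz: "cmod z \<le> 1"
  shows "Re (z * cterm Y u w) \<le> (Re (Y 2 2 + Y 3 3) * ((cmod (u 0))^2 + (cmod (u 1))^2)
            + Re (Y 0 0 + Y 1 1) * ((cmod (w 0))^2 + (cmod (w 1))^2)) / 2"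
proof -
  have herm: "\<forall>a<4. \<forall>b<4. Y b a = cnj (Y a b)" using psd unfolding psd_def by blast
  have nn: "\<And>x. 0 \<le> Re (qf 4 Y x)" using psd unfolding psd_def qf_def by blast
  have d: "0 \<le> Re (Y a a)" if "a < 4" for a
  proof -
    have "qf 4 Y (\<lambda>i. if i = a then 1 else 0) = Y a a"
      using that by (auto simp add: qf_def eval_nat_numeral less_Suc_eq)
    then show ?thesis using nn[of "\<lambda>i. if i = a then 1 else 0"] by simp
  qed
  define nu where "nu = (cmod (u 0))^2 + (cmod (u 1))^2"
  define A where "A = (cmod (w 0))^2 + (cmod (w 1))^2"
  define tA where "tA = Re (Y 0 0 + Y 1 1)"
  define tC where "tC = Re (Y 2 2 + Y 3 3)"
  have tA: "0 \<le> tA" using d[of 0] d[of 1] by (simp add: tA_def)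
  have tC: "0 \<le> tC" using d[of 2] d[of 3] by (simp add: tC_def)
  have nu0: "0 \<le> nu" and A0: "0 \<le> A" by (simp_all add: nu_def A_def)
  have goal: "Re (z * cterm Y u w) \<le> (tC * nu + tA * A) / 2"
  proof (cases "nu = 0 \<or> A = 0")
    case True
    then have "(u 0 = 0 \<and> u 1 = 0) \<or> (w 0 = 0 \<and> w 1 = 0)"
      unfolding nu_def A_def by (auto simp add: add_nonneg_eq_0_iff)
    then have "cterm Y u w = 0" unfolding ct by auto
    then show ?thesis using tA tC nu0 A0 by simp
  next
    case False
    then have nup: "0 < nu" and Ap: "0 < A" using nu0 A0 by auto
    define p where "p = (\<lambda>i::nat. if i = 0 then u 0 else if i = 1 then u 1 else 0)"
    define q where "q = (\<lambda>i::nat. if i = 2 then w 0 else if i = 3 then w 1 else 0)"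
    define m where "m = (\<lambda>i::nat. if i = 0 then - cnj (u 1) else if i = 1 then cnj (u 0) else 0)"
    define n where "n = (\<lambda>i::nat. if i = 2 then - cnj (w 1) else if i = 3 then cnj (w 0) else 0)"
    have nuc: "complex_of_real nu = u 0 * cnj (u 0) + u 1 * cnj (u 1)"
      unfolding nu_def by (simp add: complex_norm_square[symmetric])
    have Ac: "complex_of_real A = w 0 * cnj (w 0) + w 1 * cnj (w 1)"
      unfolding A_def by (simp add: complex_norm_square[symmetric])
    have F1: "qf 4 Y p + qf 4 Y m = complex_of_real nu * (Y 0 0 + Y 1 1)"
      unfolding nuc p_def m_def qp by (simp add: algebra_simps)
    have F2: "qf 4 Y q + qf 4 Y n = complex_of_real A * (Y 2 2 + Y 3 3)"
      unfolding Ac q_def n_def qq by (simp add: algebra_simps)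
    have F3: "cterm Y u w = bf 4 Y p q - bf 4 Y n m"
      unfolding ct p_def q_def m_def n_def bpq bqp by (simp add: algebra_simps)
    have hnm: "bf 4 Y n m = cnj (bf 4 Y m n)" using bf_herm[OF herm] .
    have ca: "cmod (complex_of_real A) = A" using Ap by simp
    have cb1: "cmod (- z * complex_of_real nu) = cmod z * nu" using nup by (simp add: norm_mult)
    have cb2: "cmod (cnj z * complex_of_real nu) = cmod z * nu" using nup by (simp add: norm_mult)
    have r1: "Re (cnj (complex_of_real A) * (- z * complex_of_real nu) * bf 4 Y p q) = - (A * nu * Re (z * bf 4 Y p q))"
    proof -
      have "cnj (complex_of_real A) * (- z * complex_of_real nu) * bf 4 Y p q = complex_of_real (- (A * nu)) * (z * bf 4 Y p q)"
        by (simp add: algebra_simps)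
      then show ?thesis by (simp only: Re_ofr cnj.sel(1)) simp
    qed
    have r2: "Re (cnj (complex_of_real A) * (cnj z * complex_of_real nu) * bf 4 Y m n) = A * nu * Re (z * bf 4 Y n m)"
    proof -
      have "cnj (complex_of_real A) * (cnj z * complex_of_real nu) * bf 4 Y m n = complex_of_real (A * nu) * cnj (z * bf 4 Y n m)"
        unfolding hnm by (simp add: algebra_simps)
      then show ?thesis by (simp only: Re_ofr cnj.sel(1))
    qed
    have h1: "0 \<le> A^2 * Re (qf 4 Y p) - 2 * (A * nu * Re (z * bf 4 Y p q)) + (cmod z * nu)^2 * Re (qf 4 Y q)"
      using nn[of "\<lambda>i. complex_of_real A * p i + (- z * complex_of_real nu) * q i"]
      unfolding qf_lin_re[OF herm] ca cb1 r1 by simp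
    have h2: "0 \<le> A^2 * Re (qf 4 Y m) + 2 * (A * nu * Re (z * bf 4 Y n m)) + (cmod z * nu)^2 * Re (qf 4 Y n)"
      using nn[of "\<lambda>i. complex_of_real A * m i + (cnj z * complex_of_real nu) * n i"]
      unfolding qf_lin_re[OF herm] ca cb2 r2 by simp
    have PM: "Re (qf 4 Y p) + Re (qf 4 Y m) = nu * tA"
      using arg_cong[OF F1, of Re] unfolding tA_def Re_ofr by simp
    have QN: "Re (qf 4 Y q) + Re (qf 4 Y n) = A * tC"
      using arg_cong[OF F2, of Re] unfolding tC_def Re_ofr by simp
    have zz: "(cmod z)^2 \<le> 1" using hz by (simp add: power_le_one)
    have K: "0 \<le> nu^2 * (A * tC)" using nup Ap tC by simp
    have zK: "(cmod z)^2 * (nu^2 * (A * tC)) \<le> nu^2 * (A * tC)"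
      using mult_left_le_one_le[OF K _ zz] by simp
    have ReF3: "Re (z * cterm Y u w) = Re (z * bf 4 Y p q) - Re (z * bf 4 Y n m)"
      unfolding F3 by (simp add: algebra_simps)
    have sum: "2 * (A * nu * Re (z * cterm Y u w)) \<le> A^2 * (Re (qf 4 Y p) + Re (qf 4 Y m))
        + (cmod z)^2 * nu^2 * (Re (qf 4 Y q) + Re (qf 4 Y n))"
      using h1 h2 unfolding ReF3 by (simp add: algebra_simps power_mult_distrib)
    have "2 * (A * nu * Re (z * cterm Y u w)) \<le> A^2 * (nu * tA) + nu^2 * (A * tC)"
      using sum zK unfolding PM QN by (simp add: algebra_simps)
    then have "(A * nu) * (2 * Re (z * cterm Y u w)) \<le> (A * nu) * (A * tA + nu * tC)"
      by (simp add: algebra_simps power2_eq_square)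
    then have "2 * Re (z * cterm Y u w) \<le> A * tA + nu * tC"
      using Ap nup by (simp add: mult_le_cancel_left_pos)
    then show ?thesis by (simp add: algebra_simps)
  qed
  then show ?thesis unfolding tA_def tC_def nu_def A_def .
qed



lemma divmod2: "r < 2 \<Longrightarrow> (2*i+r) div 2 = (i::nat) \<and> (2*i+r) mod 2 = r"
  by (cases "r = 0") (auto simp: less_2_cases_iff)

lemma sum_pairs: "(\<Sum>a<2*(k::nat). f a :: complex) = (\<Sum>i<k. \<Sum>r<2. f (2*i+r))"
proof (induction k)
  case 0 then show ?case by simp
next
  case (Suc k)
  have "{..<2 * Suc k} = insert (2*k+1) (insert (2*k) {..<2*k})" by auto
  then have "(\<Sum>a<2*Suc k. f a) = f (2*k+1) + f (2*k) + (\<Sum>a<2*k. f a)" by simp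
  then show ?case using Suc by (simp add: eval_nat_numeral)
qed

lemma two_blocks:
  fixes k :: nat
  assumes "i < k" "j < k" "i \<noteq> j" "\<And>l. l \<noteq> i \<Longrightarrow> l \<noteq> j \<Longrightarrow> G l = 0"
  shows "(\<Sum>l<k. G l) = G i + (G j :: complex)"
proof -
  have "(\<Sum>l\<in>{i,j}. G l) = (\<Sum>l<k. G l)"
    using assms by (intro sum.mono_neutral_left) auto
  then show ?thesis using assms(3) by simp
qed


definition idx :: "nat \<Rightarrow> nat \<Rightarrow> nat \<Rightarrow> nat" where
  "idx i j a = (if a < 2 then 2*i+a else 2*j+(a-2))"
definition sub4 :: "cmat \<Rightarrow> nat \<Rightarrow> nat \<Rightarrow> cmat" where
  "sub4 X i j = (\<lambda>a b. X (idx i j a) (idx i j b))"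

lemma psd_sub4:
  assumes psd: "psd (2*k) X" and ij: "i < k" "j < k" "i \<noteq> j"
  shows "psd 4 (sub4 X i j)"
  unfolding psd_def
proof (intro conjI allI impI)
  have herm: "\<forall>a<2*k. \<forall>b<2*k. X b a = cnj (X a b)" using psd unfolding psd_def by blast
  fix a b assume "a < (4::nat)" "b < (4::nat)"
  then have "idx i j a < 2*k" "idx i j b < 2*k" using ij by (auto simp: idx_def)
  then show "sub4 X i j b a = cnj (sub4 X i j a b)" using herm unfolding sub4_def by blast
next
  fix y :: "nat \<Rightarrow> complex"
  define x where "x = (\<lambda>a. if a div 2 = i then y (a mod 2) else if a div 2 = j then y (2 + a mod 2) else 0)"
  have xv: "x (2*l+r) = (if l = i then y r else if l = j then y (2+r) else 0)" if "r < 2" for l r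
    using divmod2[OF that, of l] unfolding x_def by simp
  have nn: "0 \<le> Re (\<Sum>a<2*k. \<Sum>b<2*k. cnj (x a) * X a b * x b)" using psd unfolding psd_def by blast
  define R where "R a = (\<Sum>b<2*k. X a b * x b)" for a
  have inner: "R a = (\<Sum>s<2. X a (2*i+s) * y s) + (\<Sum>s<2. X a (2*j+s) * y (2+s))" for a
  proof -
    have "R a = (\<Sum>l<k. \<Sum>s<2. X a (2*l+s) * x (2*l+s))" unfolding R_def by (rule sum_pairs)
    also have "\<dots> = (\<Sum>s<2. X a (2*i+s) * x (2*i+s)) + (\<Sum>s<2. X a (2*j+s) * x (2*j+s))"
      by (rule two_blocks[OF ij]) (simp add: xv)
    also have "\<dots> = (\<Sum>s<2. X a (2*i+s) * y s) + (\<Sum>s<2. X a (2*j+s) * y (2+s))"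
      using ij(3) by (simp add: xv)
    finally show ?thesis .
  qed
  have "(\<Sum>a<2*k. \<Sum>b<2*k. cnj (x a) * X a b * x b) = (\<Sum>a<2*k. cnj (x a) * R a)"
    unfolding R_def by (simp add: sum_distrib_left mult.assoc)
  also have "\<dots> = (\<Sum>l<k. \<Sum>r<2. cnj (x (2*l+r)) * R (2*l+r))" by (rule sum_pairs)
  also have "\<dots> = (\<Sum>r<2. cnj (x (2*i+r)) * R (2*i+r)) + (\<Sum>r<2. cnj (x (2*j+r)) * R (2*j+r))"
    by (rule two_blocks[OF ij]) (simp add: xv)
  also have "\<dots> = (\<Sum>r<2. cnj (y r) * R (2*i+r)) + (\<Sum>r<2. cnj (y (2+r)) * R (2*j+r))"
    using ij(3) by (simp add: xv)
  also have "\<dots> = (\<Sum>a<4. \<Sum>b<4. cnj (y a) * sub4 X i j a b * y b)"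
    unfolding inner by (simp add: sub4_def idx_def eval_nat_numeral algebra_simps)
  finally show "0 \<le> Re (\<Sum>a<4. \<Sum>b<4. cnj (y a) * sub4 X i j a b * y b)" using nn by simp
qed


lemma PhiD: "r < 2 \<Longrightarrow> s < 2 \<Longrightarrow> Phi_z k z X (2*l+r) (2*l+s) =
   (if r = s then (mtrace (2*k) X - mtrace 2 (blk X l l)) / (2 * (of_nat k - 1)) else 0)"
  unfolding Phi_z_def Let_def using divmod2[of r l] divmod2[of s l] by simp

lemma PhiO: "r < 2 \<Longrightarrow> s < 2 \<Longrightarrow> l \<noteq> m \<Longrightarrow> Phi_z k z X (2*l+r) (2*m+s) =
   - z l m / (2 * (of_nat k - 1)) * (blk X l m r s - R2 (blk X m l) r s)"
  unfolding Phi_z_def Let_def using divmod2[of r l] divmod2[of s m] by simp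

lemma real_of_cnj: "cnj w = w \<Longrightarrow> w = complex_of_real (Re w)"
  by (simp add: complex_eq_iff)

theorem mainTheorem7:
  fixes k :: nat and z :: "nat \<Rightarrow> nat \<Rightarrow> complex"
  assumes "k \<ge> 2"
    and "\<And>i j. i < j \<Longrightarrow> j < k \<Longrightarrow> cmod (z i j) \<le> 1"
    and "\<And>i j. i < j \<Longrightarrow> j < k \<Longrightarrow> z j i = cnj (z i j)"
  shows "positive_map (2 * k) (Phi_z k z)"
  unfolding positive_map_def
proof (intro allI impI)
  fix X assume psd: "psd (2*k) X"
  have herm: "\<forall>a<2*k. \<forall>b<2*k. X b a = cnj (X a b)" using psd unfolding psd_def by blast
  have hX: "cnj (X a b) = X b a" if "a < 2*k" "b < 2*k" for a b
  proof -
    have "X b a = cnj (X a b)" using herm that by blast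
    then show ?thesis by simp
  qed
  define d where "d = 2 * (real k - 1)"
  have dpos: "0 < d" using assms(1) unfolding d_def by simp
  have dc: "2 * (of_nat k - 1 :: complex) = complex_of_real d" unfolding d_def by simp
  define T where "T = mtrace (2*k) X"
  define rt where "rt l = Re (X (2*l) (2*l) + X (2*l+1) (2*l+1))" for l
  have tt: "mtrace 2 (blk X l l) = X (2*l) (2*l) + X (2*l+1) (2*l+1)" for l
    by (simp add: mtrace_def blk_def eval_nat_numeral)
  have ttr: "X (2*l) (2*l) + X (2*l+1) (2*l+1) = complex_of_real (rt l)" if "l < k" for l
  proof -
    have "cnj (X (2*l) (2*l) + X (2*l+1) (2*l+1)) = X (2*l) (2*l) + X (2*l+1) (2*l+1)"
      using that by (simp add: hX)
    then show ?thesis unfolding rt_def by (rule real_of_cnj)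
  qed
  have Tsum: "T = (\<Sum>l<k. X (2*l) (2*l) + X (2*l+1) (2*l+1))"
    unfolding T_def mtrace_def sum_pairs by (simp add: eval_nat_numeral)
  have Tr: "T = complex_of_real (\<Sum>l<k. rt l)"
    unfolding Tsum using ttr by simp
  have zb: "cmod (z l m) \<le> 1" if "l < k" "m < k" "l \<noteq> m" for l m
  proof (cases "l < m")
    case True then show ?thesis using assms(2) that by blast
  next
    case False then have "m < l" using that by simp
    then have "z l m = cnj (z m l)" using assms(3) that by blast
    then show ?thesis using assms(2)[OF \<open>m < l\<close> \<open>l < k\<close>] by simp
  qed
  have zc: "z m l = cnj (z l m)" if "l < k" "m < k" "l \<noteq> m" for l m
  proof (cases "l < m")
    case True then show ?thesis using assms(3) that by blast
  next
    case False then have "m < l" using that by simp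
    then have "z l m = cnj (z m l)" using assms(3) that by blast
    then show ?thesis by simp
  qed
  show "psd (2*k) (Phi_z k z X)"
    unfolding psd_def
  proof (intro conjI allI impI)
    fix a b assume ab: "a < 2*k" "b < 2*k"
    define l where "l = a div 2"
    define r where "r = a mod 2"
    define m where "m = b div 2"
    define s where "s = b mod 2"
    have a: "a = 2*l+r" and b: "b = 2*m+s" unfolding l_def r_def m_def s_def by simp_all
    have r2: "r < 2" and s2: "s < 2" unfolding r_def s_def by simp_all
    have lk: "l < k" and mk: "m < k" using ab unfolding l_def m_def by auto
    show "Phi_z k z X b a = cnj (Phi_z k z X a b)"
    proof (cases "l = m")
      case True
      have "(mtrace (2*k) X - mtrace 2 (blk X l l)) / (2 * (of_nat k - 1)) =
         complex_of_real (((\<Sum>l<k. rt l) - rt l) / d)"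
        unfolding T_def[symmetric] Tr tt ttr[OF lk] dc by simp
      then show ?thesis unfolding a b True using PhiD[OF r2 s2, of k z X m] PhiD[OF s2 r2, of k z X m]
        by simp
    next
      case False
      have e1: "Phi_z k z X b a = - z m l / (2 * (of_nat k - 1)) * (blk X m l s r - R2 (blk X l m) s r)"
        unfolding a b using PhiO[OF s2 r2, of m l] False by simp
      have e2: "Phi_z k z X a b = - z l m / (2 * (of_nat k - 1)) * (blk X l m r s - R2 (blk X m l) r s)"
        unfolding a b using PhiO[OF r2 s2 False] by simp
      show ?thesis unfolding e1 e2 zc[OF lk mk False] dc
        using lk mk r2 s2 by (simp add: blk_def R2_def mtrace_def eval_nat_numeral hX)
    qed
  next
    fix x :: "nat \<Rightarrow> complex"
    show "0 \<le> Re (\<Sum>a<2*k. \<Sum>b<2*k. cnj (x a) * Phi_z k z X a b * x b)"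
    proof -
      define g where "g a b = cnj (x a) * Phi_z k z X a b * x b" for a b
      define S where "S l m = (\<Sum>r<2. \<Sum>s<2. g (2*l+r) (2*m+s))" for l m
      define nv where "nv l = (cmod (x (2*l)))^2 + (cmod (x (2*l+1)))^2" for l
      define RT where "RT = (\<Sum>l<k. rt l)"
      have qs: "(\<Sum>a<2*k. \<Sum>b<2*k. g a b) = (\<Sum>l<k. \<Sum>m<k. S l m)"
      proof -
        have "(\<Sum>a<2*k. \<Sum>b<2*k. g a b) = (\<Sum>l<k. \<Sum>r<2. \<Sum>m<k. \<Sum>s<2. g (2*l+r) (2*m+s))"
          by (simp only: sum_pairs)
        also have "\<dots> = (\<Sum>l<k. \<Sum>m<k. \<Sum>r<2. \<Sum>s<2. g (2*l+r) (2*m+s))"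
          by (rule sum.cong[OF refl], rule sum.swap)
        finally show ?thesis unfolding S_def .
      qed
      have nvc: "cnj (x (2*l)) * x (2*l) + cnj (x (2*l+1)) * x (2*l+1) = complex_of_real (nv l)" for l
        unfolding nv_def of_real_add complex_norm_square by (simp add: mult.commute)
      have Sd: "Re (S l l) = (RT - rt l) / d * nv l" if lk: "l < k" for l
      proof -
        have "(mtrace (2*k) X - mtrace 2 (blk X l l)) / (2 * (of_nat k - 1)) =
           complex_of_real ((RT - rt l) / d)"
          unfolding T_def[symmetric] Tr tt ttr[OF lk] dc RT_def by simp
        then have "S l l = complex_of_real ((RT - rt l) / d) * complex_of_real (nv l)"
          unfolding S_def g_def nvc[symmetric] using PhiD[of 0 0 k z X l] PhiD[of 0 1 k z X l]
            PhiD[of 1 0 k z X l] PhiD[of 1 1 k z X l]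
          by (simp add: eval_nat_numeral algebra_simps)
        then show ?thesis by simp
      qed
      have So: "- ((rt m * nv l + rt l * nv m) / (2 * d)) \<le> Re (S l m)"
        if lk: "l < k" and mk: "m < k" and lm: "l \<noteq> m" for l m
      proof -
        define c where "c = cterm (sub4 X l m) (\<lambda>r. x (2*l+r)) (\<lambda>s. x (2*m+s))"
        define dd where "dd = 2 * (of_nat k - 1 :: complex)"
        have "S l m = (\<Sum>r<2. \<Sum>s<2. (- z l m / dd) * (cnj (x (2*l+r)) * (blk X l m r s - R2 (blk X m l) r s) * x (2*m+s)))"
          unfolding S_def g_def dd_def by (intro sum.cong refl) (simp add: PhiO lm)
        also have "\<dots> = (- z l m / dd) * (\<Sum>r<2. \<Sum>s<2. cnj (x (2*l+r)) * (blk X l m r s - R2 (blk X m l) r s) * x (2*m+s))"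
          by (simp add: sum_distrib_left)
        also have "(\<Sum>r<2. \<Sum>s<2. cnj (x (2*l+r)) * (blk X l m r s - R2 (blk X m l) r s) * x (2*m+s)) = c"
          unfolding c_def ct by (simp add: eval_nat_numeral sub4_def idx_def blk_def R2_def mtrace_def algebra_simps)
        finally have Sc: "S l m = complex_of_real (- 1 / d) * (z l m * c)"
          unfolding dd_def dc by simp
        have K: "Re (z l m * c) \<le> (rt m * nv l + rt l * nv m) / 2"
          using key4[OF psd_sub4[OF psd lk mk lm] zb[OF lk mk lm], of "\<lambda>r. x (2*l+r)" "\<lambda>s. x (2*m+s)"]
          unfolding c_def[symmetric] by (simp add: sub4_def idx_def rt_def nv_def)
        have ReS: "Re (S l m) = - (Re (z l m * c) / d)" unfolding Sc Re_ofr by simp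
        have R1: "Re (z l m * c) / d \<le> ((rt m * nv l + rt l * nv m) / 2) / d"
          by (rule divide_right_mono[OF K less_imp_le[OF dpos]])
        have e: "((rt m * nv l + rt l * nv m) / 2) / d = (rt m * nv l + rt l * nv m) / (2 * d)" by simp
        show ?thesis using ReS R1 e by linarith
      qed
      define L where "L l m = (if l = m then (RT - rt l) * nv l / d else - ((rt m * nv l + rt l * nv m) / (2 * d)))" for l m
      have SL: "L l m \<le> Re (S l m)" if "l < k" "m < k" for l m
        using Sd[of l] So[of l m] that unfolding L_def by auto
      have L0: "(\<Sum>l<k. \<Sum>m<k. L l m) = 0"
      proof -
        define M where "M l m = - ((rt m * nv l + rt l * nv m) / (2 * d))" for l m
        have LM: "L l m = M l m + (if l = m then RT * nv l / d else 0)" for l m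
          using dpos unfolding L_def M_def by (auto simp: field_simps)
        have "(\<Sum>l<k. \<Sum>m<k. L l m) = (\<Sum>l<k. \<Sum>m<k. M l m) + (\<Sum>l<k. RT * nv l / d)"
          unfolding LM by (simp add: sum.distrib)
        also have "(\<Sum>l<k. \<Sum>m<k. M l m) = - (((\<Sum>l<k. \<Sum>m<k. nv l * rt m) + (\<Sum>l<k. \<Sum>m<k. rt l * nv m)) / (2*d))"
          unfolding M_def by (simp add: sum.distrib sum_divide_distrib[symmetric] sum_negf algebra_simps)
        also have "(\<Sum>l<k. \<Sum>m<k. nv l * rt m) = (\<Sum>l<k. nv l) * RT"
          unfolding RT_def by (simp add: sum_product)
        also have "(\<Sum>l<k. \<Sum>m<k. rt l * nv m) = RT * (\<Sum>l<k. nv l)"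
          unfolding RT_def by (simp add: sum_product)
        also have "(\<Sum>l<k. RT * nv l / d) = RT * (\<Sum>l<k. nv l) / d"
          by (simp add: sum_divide_distrib[symmetric] sum_distrib_left)
        finally show ?thesis using dpos by (simp add: field_simps)
      qed
      have "0 = (\<Sum>l<k. \<Sum>m<k. L l m)" using L0 by simp
      also have "\<dots> \<le> (\<Sum>l<k. \<Sum>m<k. Re (S l m))"
        by (intro sum_mono) (use SL in auto)
      also have "\<dots> = Re (\<Sum>a<2*k. \<Sum>b<2*k. g a b)" unfolding qs by simp
      finally show ?thesis unfolding g_def .
    qed
  qed
qed


end
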